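(* Consider the control-affine system $\dot x = f(x) + g(x)u$ with $f:\mathbb{R}^{n_x}\to\mathbb{R}^{n_x}$, $g:\mathbb{R}^{n_x}\to\mathbb{R}^{n_x\times n_u}$ Lipschitz and $\mathcal{C}^{m-1}$, control set $\mathcal{U}\subset\mathbb{R}^{n_u}$ compact, and a $\mathcal{C}^m$ function $h:\mathbb{R}^{n_x}\to\mathbb{R}$ of relative degree $m$. Let $\Gamma_1,\dots,\Gamma_m$ be class $\mathcal{K}$ functions with $\Gamma_i \in \mathcal{C}^{m-i}$, and define $\psi_0 = h$, $\psi_i = \dot\psi_{i-1} + \Gamma_i(\psi_{i-1})$ for $i = 1,\dots,m-1$. Let $a(x) = (L_g L_f^{m-1} h(x))^\top$ and $b(x) = -L_f^m h(x) - \sum_{i=0}^{m-1} L_f^i(\Gamma_{m-i}\circ\psi_{m-i-1})(x)$, let $u_n$ be a nominal controller, and let $\pi(x)$ be a minimizer of $\|u - u_n(x)\|_2^2$ over $u \in \mathcal{U}$ subject to $a(x)^\top u \ge b(x)$. Assume this problem is feasible and $\pi(x) \notin \partial\mathcal{U}$. If the system controlled by $\pi$ is at an equilibrium $(x_e,u_e)$, i.e. $u_e = \pi(x_e)$ and $0 = f(x_e) + g(x_e)u_e$, then either (i) $u_n(x_e) = u_e$, or (ii) $h(x_e) = 0$.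
   Context: $h$ has relative degree $m$ means $L_g L_f^{i} h \equiv 0$ for $i = 0,\dots,m-2$ (so that the $m$-th time derivative of $h$ along the system is the first to depend on $u$, namely $\dot\psi_{m-1} + \Gamma_m(\psi_{m-1}) = L_f^m h + L_g L_f^{m-1}h\, u + \sum_{i=0}^{m-1} L_f^i(\Gamma_{m-i}\circ\psi_{m-i-1})$). Derivatives $\dot\psi_i$ are along the system trajectories. A class $\mathcal{K}$ function is continuous, strictly increasing, with value $0$ at $0$. $\partial\mathcal{U}$ denotes the boundary of $\mathcal{U}$. *)

theory Defs
  imports "HOL-Analysis.Analysis"
begin

fun Ck :: "nat \<Rightarrow> ('a::real_normed_vector \<Rightarrow> real) \<Rightarrow> bool" where
  "Ck 0 \<phi> = continuous_on UNIV \<phi>"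
| "Ck (Suc k) \<phi> = ((\<forall>x. \<phi> differentiable (at x)) \<and>
                    (\<forall>v. Ck k (\<lambda>x. frechet_derivative \<phi> (at x) v)))"

text \<open>Class K function (on the whole real line, as needed since psi may be negative).\<close>
definition class_K :: "(real \<Rightarrow> real) \<Rightarrow> bool" where
  "class_K \<Gamma> \<longleftrightarrow> continuous_on UNIV \<Gamma> \<and> strict_mono \<Gamma> \<and> \<Gamma> 0 = 0"

definition lie :: "(real^'n \<Rightarrow> real^'n) \<Rightarrow> (real^'n \<Rightarrow> real) \<Rightarrow> real^'n \<Rightarrow> real" where
  "lie F \<phi> x = frechet_derivative \<phi> (at x) (F x)"

definition lie_g :: "(real^'n \<Rightarrow> real^'m^'n) \<Rightarrow> (real^'n \<Rightarrow> real) \<Rightarrow> real^'n \<Rightarrow> real^'m" where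
  "lie_g g \<phi> x = (\<chi> j. frechet_derivative \<phi> (at x) (column j (g x)))"

text \<open>psi_0 = h, psi_i = dpsi_{i-1}/dt + Gamma_i(psi_{i-1}); for i <= m-1 the time
  derivative along the system equals L_f psi_{i-1} (the L_g term vanishes by relative degree).\<close>
primrec psi :: "(real^'n \<Rightarrow> real^'n) \<Rightarrow> (real^'n \<Rightarrow> real) \<Rightarrow> (nat \<Rightarrow> real \<Rightarrow> real)
                 \<Rightarrow> nat \<Rightarrow> real^'n \<Rightarrow> real" where
  "psi f h \<Gamma> 0 = h"
| "psi f h \<Gamma> (Suc i) = (\<lambda>x. lie f (psi f h \<Gamma> i) x + \<Gamma> (Suc i) (psi f h \<Gamma> i x))"

end

theory Submission
  imports Defs
begin
lemma fd_lin: "\<phi> differentiable (at x) \<Longrightarrow> linear (frechet_derivative \<phi> (at x))"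
  using frechet_derivative_works has_derivative_linear by blast

lemma fd_const: "frechet_derivative (\<lambda>x. c) (at x) = (\<lambda>v. 0)"
  using frechet_derivative_at[OF has_derivative_const] by simp

lemma fd_add: "\<phi> differentiable (at x) \<Longrightarrow> \<psi> differentiable (at x) \<Longrightarrow>
  frechet_derivative (\<lambda>x. \<phi> x + \<psi> x) (at x) = (\<lambda>v. frechet_derivative \<phi> (at x) v + frechet_derivative \<psi> (at x) v)"
  by (rule frechet_derivative_at[symmetric], rule has_derivative_add) (simp_all add: frechet_derivative_works[symmetric])

lemma fd_mult: "\<phi> differentiable (at x) \<Longrightarrow> \<psi> differentiable (at x) \<Longrightarrow>
  frechet_derivative (\<lambda>x. \<phi> x * \<psi> x :: real) (at x) = (\<lambda>v. \<phi> x * frechet_derivative \<psi> (at x) v + frechet_derivative \<phi> (at x) v * \<psi> x)"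
  by (rule frechet_derivative_at[symmetric], rule has_derivative_mult) (simp_all add: frechet_derivative_works[symmetric])

lemma real_lin: "linear (L::real\<Rightarrow>real) \<Longrightarrow> L y = y * L 1"
  using linear_scale[of L y 1] by simp

lemma fd_comp: "\<phi> differentiable (at x) \<Longrightarrow> (\<Gamma>::real\<Rightarrow>real) differentiable (at (\<phi> x)) \<Longrightarrow>
  frechet_derivative (\<Gamma> \<circ> \<phi>) (at x) v = frechet_derivative \<phi> (at x) v * frechet_derivative \<Gamma> (at (\<phi> x)) 1"
proof -
  assume d1: "\<phi> differentiable (at x)" and d2: "\<Gamma> differentiable (at (\<phi> x))"
  have "frechet_derivative (\<Gamma> \<circ> \<phi>) (at x) v = frechet_derivative \<Gamma> (at (\<phi> x)) (frechet_derivative \<phi> (at x) v)"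
    using frechet_derivative_compose[OF d1 d2] by simp
  also have "\<dots> = frechet_derivative \<phi> (at x) v * frechet_derivative \<Gamma> (at (\<phi> x)) 1"
    by (rule real_lin[OF fd_lin[OF d2]])
  finally show ?thesis .
qed

lemma Ck_1_diff: "Ck (Suc k) \<phi> \<Longrightarrow> \<phi> differentiable (at x)" by simp

lemma Ck_Suc_down: "Ck (Suc k) \<phi> \<Longrightarrow> Ck k \<phi>"
proof (induction k arbitrary: \<phi>)
  case 0
  then show ?case by (simp add: continuous_at_imp_continuous_on differentiable_imp_continuous_within)
next
  case (Suc k)
  then show ?case by (metis Ck.simps(2))
qed

lemma Ck_mono: "k \<le> l \<Longrightarrow> Ck l \<phi> \<Longrightarrow> Ck k \<phi>"
proof (induction l)
  case 0 then show ?case by simp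
next
  case (Suc l) then show ?case by (metis Ck_Suc_down le_Suc_eq)
qed
  

lemma Ck_const: "Ck k (\<lambda>x. c)"
  by (induction k arbitrary: c) (auto simp: fd_const)

lemma Ck_add: "Ck k \<phi> \<Longrightarrow> Ck k \<psi> \<Longrightarrow> Ck k (\<lambda>x. \<phi> x + \<psi> x)"
proof (induction k arbitrary: \<phi> \<psi>)
  case 0 then show ?case by (simp add: continuous_on_add)
next
  case (Suc k)
  then show ?case by (auto simp: fd_add)
qed

lemma Ck_mult: "Ck k \<phi> \<Longrightarrow> Ck k \<psi> \<Longrightarrow> Ck k (\<lambda>x. \<phi> x * \<psi> x)"
proof (induction k arbitrary: \<phi> \<psi>)
  case 0 then show ?case by (simp add: continuous_on_mult)
next
  case (Suc k)
  have d: "\<And>x. \<phi> differentiable (at x)" "\<And>x. \<psi> differentiable (at x)" using Suc.prems by auto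
  have "Ck k (\<lambda>x. \<phi> x * frechet_derivative \<psi> (at x) v + frechet_derivative \<phi> (at x) v * \<psi> x)" for v
    using Suc by (intro Ck_add Suc.IH) (auto intro: Ck_Suc_down)
  then show ?case using d by (auto simp: fd_mult)
qed

lemma Ck_sum: "finite S \<Longrightarrow> (\<And>i. i \<in> S \<Longrightarrow> Ck k (F i)) \<Longrightarrow> Ck k (\<lambda>x. \<Sum>i\<in>S. F i x)"
  by (induction S rule: finite_induct) (auto intro: Ck_add Ck_const)

lemma lie_expand: "\<phi> differentiable (at x) \<Longrightarrow>
  lie f \<phi> x = (\<Sum>i\<in>UNIV. f x $ i * frechet_derivative \<phi> (at x) (axis i 1))"
proof -
  assume d: "\<phi> differentiable (at x)"
  have "lie f \<phi> x = frechet_derivative \<phi> (at x) (\<Sum>i\<in>UNIV. (f x $ i) *\<^sub>R axis i 1)"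
    unfolding lie_def using basis_expansion[of "f x"] by (simp add: scalar_mult_eq_scaleR)
  also have "\<dots> = (\<Sum>i\<in>UNIV. f x $ i * frechet_derivative \<phi> (at x) (axis i 1))"
    using fd_lin[OF d] by (simp add: linear_sum linear_scale)
  finally show ?thesis .
qed

lemma H_Ck:
  assumes f_smooth: "\<forall>i. Ck (m - 1) (\<lambda>x. f x $ i)" and h_smooth: "Ck m h"
  shows "j \<le> m \<Longrightarrow> Ck (m - j) ((lie f ^^ j) h)"
proof (induction j)
  case 0 then show ?case using h_smooth by simp
next
  case (Suc j)
  then have c: "Ck (Suc (m - Suc j)) ((lie f ^^ j) h)" by (simp add: Suc_diff_Suc)
  then have d: "\<And>x. (lie f ^^ j) h differentiable (at x)" by simp
  have e: "(lie f ^^ Suc j) h = (\<lambda>x. \<Sum>i\<in>UNIV. f x $ i * frechet_derivative ((lie f ^^ j) h) (at x) (axis i 1))"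
    using lie_expand[OF d] by auto
  have "Ck (m - Suc j) (\<lambda>x. \<Sum>i\<in>UNIV. f x $ i * frechet_derivative ((lie f ^^ j) h) (at x) (axis i 1))"
    apply (rule Ck_sum, simp)
    apply (rule Ck_mult)
    using f_smooth Ck_mono apply (metis diff_le_mono2 le_add1 plus_1_eq_Suc)
    using c by simp
  then show ?case using e by simp
qed

lemma lie_eq:
  assumes d: "\<phi> differentiable (at xe)" and eq: "f xe + g xe *v ue = 0"
  shows "lie f \<phi> xe = - (lie_g g \<phi> xe \<bullet> ue)"
proof -
  let ?D = "frechet_derivative \<phi> (at xe)"
  have l: "linear ?D" using fd_lin[OF d] .
  have "g xe *v ue = (\<Sum>j\<in>UNIV. ue $ j *\<^sub>R column j (g xe))"
    unfolding matrix_mult_sum scalar_mult_eq_scaleR ..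
  then have fx: "f xe = - (\<Sum>j\<in>UNIV. ue $ j *\<^sub>R column j (g xe))"
    using eq by (metis add.commute add_eq_0_iff)
  have "?D (f xe) = - ?D (\<Sum>j\<in>UNIV. ue $ j *\<^sub>R column j (g xe))"
    unfolding fx using linear_neg[OF l] by blast
  also have "?D (\<Sum>j\<in>UNIV. ue $ j *\<^sub>R column j (g xe)) = (\<Sum>j\<in>UNIV. ue $ j * ?D (column j (g xe)))"
    by (simp add: linear_sum[OF l] linear_scale[OF l])
  finally have "lie f \<phi> xe = - (\<Sum>j\<in>UNIV. ue $ j * ?D (column j (g xe)))" unfolding lie_def .
  then show ?thesis by (simp add: lie_g_def inner_vec_def mult.commute)
qed

inductive Wc :: "(real^'n \<Rightarrow> real^'n) \<Rightarrow> (real^'n \<Rightarrow> real) \<Rightarrow> nat \<Rightarrow> nat \<Rightarrow> nat \<Rightarrow> (real^'n \<Rightarrow> real) \<Rightarrow> bool"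
  for f h m where
  W_base: "j \<le> k \<Longrightarrow> s + j \<le> m \<Longrightarrow> Wc f h m k s ((lie f ^^ j) h)"
| W_add: "Wc f h m k s \<phi> \<Longrightarrow> Wc f h m k s \<psi> \<Longrightarrow> Wc f h m k s (\<lambda>x. \<phi> x + \<psi> x)"
| W_mult: "Wc f h m k s \<phi> \<Longrightarrow> Wc f h m k s \<psi> \<Longrightarrow> Wc f h m k s (\<lambda>x. \<phi> x * \<psi> x)"
| W_comp: "Wc f h m k s \<phi> \<Longrightarrow> Ck s \<Gamma> \<Longrightarrow> Wc f h m k s (\<Gamma> \<circ> \<phi>)"

lemma W_mono: "Wc f h m k s \<phi> \<Longrightarrow> k \<le> k' \<Longrightarrow> s' \<le> s \<Longrightarrow> Wc f h m k' s' \<phi>"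
proof (induction rule: Wc.induct)
  case (W_base j k s) then show ?case by (intro Wc.W_base) auto
next
  case (W_add k s \<phi> \<psi>) then show ?case by (intro Wc.W_add) auto
next
  case (W_mult k s \<phi> \<psi>) then show ?case by (intro Wc.W_mult) auto
next
  case (W_comp k s \<phi> \<Gamma>) then show ?case by (intro Wc.W_comp) (auto intro: Ck_mono)
qed

lemma W_diff:
  assumes f_smooth: "\<forall>i. Ck (m - 1) (\<lambda>x. f x $ i)" and h_smooth: "Ck m h"
  shows "Wc f h m k s \<phi> \<Longrightarrow> 1 \<le> s \<Longrightarrow> \<phi> differentiable (at x)"
proof (induction arbitrary: x rule: Wc.induct)
  case (W_base j k s)
  then have "Ck (m - j) ((lie f ^^ j) h)" using H_Ck[OF f_smooth h_smooth] by simp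
  moreover have "Suc 0 \<le> m - j" using W_base by arith
  ultimately have "Ck (Suc 0) ((lie f ^^ j) h)" using Ck_mono by blast
  then show ?case by simp
next
  case (W_add k s \<phi> \<psi>) then show ?case by (simp add: differentiable_add)
next
  case (W_mult k s \<phi> \<psi>) then show ?case by (simp add: differentiable_mult)
next
  case (W_comp k s \<phi> \<Gamma>)
  then have "Ck (Suc 0) \<Gamma>" using Ck_mono[of "Suc 0" s \<Gamma>] by simp
  then have "\<Gamma> differentiable (at (\<phi> x))" by simp
  then show ?case by (rule differentiable_chain_at[rotated]) (use W_comp in auto)
qed

lemma W_lieg:
  assumes f_smooth: "\<forall>i. Ck (m - 1) (\<lambda>x. f x $ i)" and h_smooth: "Ck m h"
    and rel_deg: "\<forall>i. i + 2 \<le> m \<longrightarrow> (\<forall>x. lie_g g ((lie f ^^ i) h) x = 0)"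
  shows "Wc f h m k s \<phi> \<Longrightarrow> 1 \<le> s \<Longrightarrow> k + 2 \<le> m \<Longrightarrow> frechet_derivative \<phi> (at x) (column j (g x)) = 0"
proof (induction arbitrary: x rule: Wc.induct)
  case (W_base j' k s)
  then have "lie_g g ((lie f ^^ j') h) x = 0" using rel_deg by auto
  then show ?case unfolding lie_g_def by (metis vec_lambda_beta zero_index)
next
  case (W_add k s \<phi> \<psi>)
  have "\<phi> differentiable (at x)" "\<psi> differentiable (at x)"
    using W_diff[OF f_smooth h_smooth] W_add by blast+
  then show ?case using W_add by (simp add: fd_add)
next
  case (W_mult k s \<phi> \<psi>)
  have "\<phi> differentiable (at x)" "\<psi> differentiable (at x)"
    using W_diff[OF f_smooth h_smooth] W_mult by blast+
  then show ?case using W_mult by (simp add: fd_mult)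
next
  case (W_comp k s \<phi> \<Gamma>)
  have "\<phi> differentiable (at x)" using W_diff[OF f_smooth h_smooth] W_comp by blast
  moreover have "Ck (Suc 0) \<Gamma>" using W_comp Ck_mono[of "Suc 0" s \<Gamma>] by simp
  then have "\<Gamma> differentiable (at (\<phi> x))" by simp
  ultimately show ?case using W_comp fd_comp[of \<phi> x \<Gamma> "column j (g x)"] by (simp add: o_def)
qed

lemma W_lief:
  assumes f_smooth: "\<forall>i. Ck (m - 1) (\<lambda>x. f x $ i)" and h_smooth: "Ck m h"
  shows "Wc f h m k s' \<phi> \<Longrightarrow> s' = Suc s \<Longrightarrow> Wc f h m (Suc k) s (lie f \<phi>)"
proof (induction arbitrary: s rule: Wc.induct)
  case (W_base j k s')
  have e: "lie f ((lie f ^^ j) h) = (lie f ^^ Suc j) h" by simp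
  show ?case unfolding e by (rule Wc.W_base) (use W_base in auto)
next
  case (W_add k s' \<phi> \<psi>)
  have "\<And>x. \<phi> differentiable (at x)" "\<And>x. \<psi> differentiable (at x)"
    using W_diff[OF f_smooth h_smooth W_add.hyps(1)] W_diff[OF f_smooth h_smooth W_add.hyps(2)] W_add.prems by auto
  then have "lie f (\<lambda>x. \<phi> x + \<psi> x) = (\<lambda>x. lie f \<phi> x + lie f \<psi> x)"
    by (intro ext) (simp add: lie_def fd_add)
  then show ?case using W_add by (simp add: Wc.W_add)
next
  case (W_mult k s' \<phi> \<psi>)
  have "\<And>x. \<phi> differentiable (at x)" "\<And>x. \<psi> differentiable (at x)"
    using W_diff[OF f_smooth h_smooth W_mult.hyps(1)] W_diff[OF f_smooth h_smooth W_mult.hyps(2)] W_mult.prems by auto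
  then have e: "lie f (\<lambda>x. \<phi> x * \<psi> x) = (\<lambda>x. \<phi> x * lie f \<psi> x + lie f \<phi> x * \<psi> x)"
    by (intro ext) (simp add: lie_def fd_mult)
  have "Wc f h m (Suc k) s \<phi>" "Wc f h m (Suc k) s \<psi>"
    using W_mono[OF W_mult.hyps(1), of "Suc k" s] W_mono[OF W_mult.hyps(2), of "Suc k" s] W_mult.prems by auto
  moreover have "Wc f h m (Suc k) s (lie f \<phi>)" "Wc f h m (Suc k) s (lie f \<psi>)"
    using W_mult.IH W_mult.prems by auto
  ultimately show ?case unfolding e by (intro Wc.W_add Wc.W_mult)
next
  case (W_comp k s' \<phi> \<Gamma>)
  have d: "\<And>x. \<phi> differentiable (at x)" using W_diff[OF f_smooth h_smooth W_comp.hyps(1)] W_comp.prems by auto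
  have c: "Ck (Suc s) \<Gamma>" using W_comp by simp
  then have dg: "\<And>t. \<Gamma> differentiable (at t)" by simp
  have e: "lie f (\<Gamma> \<circ> \<phi>) = (\<lambda>x. lie f \<phi> x * ((\<lambda>t. frechet_derivative \<Gamma> (at t) 1) \<circ> \<phi>) x)"
    unfolding lie_def by (intro ext) (simp only: o_apply fd_comp[OF d dg])
  have "Ck s (\<lambda>t. frechet_derivative \<Gamma> (at t) 1)" using c by simp
  moreover have "Wc f h m (Suc k) s \<phi>" using W_mono[OF W_comp.hyps(1), of "Suc k" s] W_comp.prems by auto
  moreover have "Wc f h m (Suc k) s (lie f \<phi>)" using W_comp.IH W_comp.prems by auto
  ultimately show ?case unfolding e by (intro Wc.W_mult Wc.W_comp)
qed

lemma W_lief_pow: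
  assumes f_smooth: "\<forall>i. Ck (m - 1) (\<lambda>x. f x $ i)" and h_smooth: "Ck m h"
  shows "Wc f h m k (s + n) \<phi> \<Longrightarrow> Wc f h m (k + n) s ((lie f ^^ n) \<phi>)"
proof (induction n arbitrary: k s \<phi>)
  case 0 then show ?case by simp
next
  case (Suc n)
  have "Wc f h m (Suc k) (s + n) (lie f \<phi>)"
    using W_lief[OF f_smooth h_smooth Suc.prems] by simp
  from Suc.IH[OF this] have r: "Wc f h m (Suc k + n) s ((lie f ^^ n) (lie f \<phi>))" .
  have e1: "(lie f ^^ Suc n) \<phi> = (lie f ^^ n) (lie f \<phi>)" by (simp only: funpow_Suc_right o_apply)
  have e2: "k + Suc n = Suc k + n" by simp
  show ?case unfolding e1 e2 by (rule r)
qed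



lemma classK_zero: "class_K \<Gamma> \<Longrightarrow> \<Gamma> t = 0 \<Longrightarrow> t = 0"
  unfolding class_K_def
proof -
  assume a: "continuous_on UNIV \<Gamma> \<and> strict_mono \<Gamma> \<and> \<Gamma> 0 = 0" "\<Gamma> t = 0"
  show "t = 0"
  proof (rule linorder_cases[of t 0])
    assume "t < 0" then have "\<Gamma> t < \<Gamma> 0" using a strict_monoD by blast
    then show ?thesis using a by simp
  next
    assume "0 < t" then have "\<Gamma> 0 < \<Gamma> t" using a strict_monoD by blast
    then show ?thesis using a by simp
  qed
qed

theorem proposition2:
  fixes f :: "real^'nx \<Rightarrow> real^'nx"
    and g :: "real^'nx \<Rightarrow> real^'nu^'nx"
    and h :: "real^'nx \<Rightarrow> real"
    and U :: "(real^'nu) set"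
    and m :: nat
    and \<Gamma> :: "nat \<Rightarrow> real \<Rightarrow> real"
    and un \<pi> :: "real^'nx \<Rightarrow> real^'nu"
    and a :: "real^'nx \<Rightarrow> real^'nu"
    and b :: "real^'nx \<Rightarrow> real"
    and xe :: "real^'nx" and ue :: "real^'nu"
  assumes m_pos: "m \<ge> 1"
    and f_lip: "\<exists>C. C-lipschitz_on UNIV f"
    and g_lip: "\<exists>C. C-lipschitz_on UNIV g"
    and f_smooth: "\<forall>i. Ck (m - 1) (\<lambda>x. f x $ i)"
    and g_smooth: "\<forall>i j. Ck (m - 1) (\<lambda>x. g x $ i $ j)"
    and U_compact: "compact U"
    and h_smooth: "Ck m h"
    and rel_deg: "\<forall>i. i + 2 \<le> m \<longrightarrow> (\<forall>x. lie_g g ((lie f ^^ i) h) x = 0)"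
    and Gamma_K: "\<forall>i\<in>{1..m}. class_K (\<Gamma> i)"
    and Gamma_smooth: "\<forall>i\<in>{1..m}. Ck (m - i) (\<Gamma> i)"
    and a_def: "\<forall>x. a x = lie_g g ((lie f ^^ (m - 1)) h) x"
    and b_def: "\<forall>x. b x = - ((lie f ^^ m) h x)
                  - (\<Sum>i<m. (lie f ^^ i) (\<Gamma> (m - i) \<circ> psi f h \<Gamma> (m - i - 1)) x)"
    and pi_feas: "\<forall>x. \<pi> x \<in> U \<and> a x \<bullet> \<pi> x \<ge> b x"
    and pi_min: "\<forall>x. \<forall>u\<in>U. a x \<bullet> u \<ge> b x \<longrightarrow>
                   (norm (\<pi> x - un x))\<^sup>2 \<le> (norm (u - un x))\<^sup>2"
    and pi_not_bdry: "\<forall>x. \<pi> x \<notin> frontier U"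
    and eq_u: "ue = \<pi> xe"
    and eq_x: "f xe + g xe *v ue = 0"
  shows "un xe = ue \<or> h xe = 0"
proof (cases "un xe = ue")
  case True then show ?thesis by simp
next
  case False
  have psi_W: "k \<le> m - 1 \<Longrightarrow> Wc f h m k (m - k) (psi f h \<Gamma> k)" for k
  proof (induction k)
    case 0 then show ?case using Wc.W_base[where j=0 and k=0 and s=m and f=f and h=h and m=m] by simp
  next
    case (Suc k)
    then have w: "Wc f h m k (m - k) (psi f h \<Gamma> k)" by simp
    have mk: "m - k = Suc (m - Suc k)" using Suc.prems m_pos by arith
    have l: "Wc f h m (Suc k) (m - Suc k) (lie f (psi f h \<Gamma> k))"
      using W_lief[OF f_smooth h_smooth w mk] .
    have c: "Ck (m - Suc k) (\<Gamma> (Suc k))" using Gamma_smooth Suc.prems m_pos by auto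
    have w2: "Wc f h m (Suc k) (m - Suc k) (psi f h \<Gamma> k)" using W_mono[OF w] by simp
    have e: "psi f h \<Gamma> (Suc k) = (\<lambda>x. lie f (psi f h \<Gamma> k) x + (\<Gamma> (Suc k) \<circ> psi f h \<Gamma> k) x)" by simp
    show ?case unfolding e by (rule Wc.W_add[OF l Wc.W_comp[OF w2 c]])
  qed
  have zero_lie: "lie f \<phi> xe = 0" if "Wc f h m k s \<phi>" "1 \<le> s" "k + 2 \<le> m" for k s \<phi>
  proof -
    have d: "\<phi> differentiable (at xe)" using W_diff[OF f_smooth h_smooth that(1,2)] .
    have "lie_g g \<phi> xe = 0" unfolding lie_g_def vec_eq_iff
      using W_lieg[OF f_smooth h_smooth rel_deg that] by simp
    then show ?thesis using lie_eq[where f=f and g=g and ue=ue, OF d eq_x] by simp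
  qed
  \<comment> \<open>optimality: the constraint is active\<close>
  have ueU: "ue \<in> U" and feas: "a xe \<bullet> ue \<ge> b xe" using pi_feas eq_u by auto
  have "ue \<in> interior U"
    using ueU pi_not_bdry eq_u compact_imp_closed[OF U_compact] by (auto simp: frontier_def)
  then obtain e where e: "e > 0" "ball ue e \<subseteq> U" using mem_interior by blast
  have active: "a xe \<bullet> ue = b xe"
  proof (rule ccontr)
    assume "a xe \<bullet> ue \<noteq> b xe"
    then have dl: "a xe \<bullet> ue - b xe > 0" using feas by simp
    define w where "w = un xe - ue"
    define d where "d = norm w"
    define \<delta> where "\<delta> = a xe \<bullet> ue - b xe"
    define t where "t = min (1/2) (min (e / (2 * d)) (\<delta> / (2 * (\<bar>a xe \<bullet> w\<bar> + 1))))"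
    have dpos: "d > 0" using False unfolding d_def w_def by simp
    have tpos: "t > 0" using dpos e dl unfolding t_def \<delta>_def by (simp add: abs_add_one_gt_zero)
    have th: "t \<le> 1/2" unfolding t_def by (rule min.cobounded1)
    have t1: "t * d \<le> e / 2"
    proof -
      have "t \<le> e / (2 * d)" unfolding t_def by simp
      then have "t * (2 * d) \<le> e" using dpos by (simp add: pos_le_divide_eq)
      then show ?thesis by (simp add: field_simps)
    qed
    have t2: "t * \<bar>a xe \<bullet> w\<bar> \<le> \<delta> / 2"
    proof -
      have p: "\<bar>a xe \<bullet> w\<bar> + 1 > 0" by (simp add: abs_add_one_gt_zero)
      have "t \<le> \<delta> / (2 * (\<bar>a xe \<bullet> w\<bar> + 1))" unfolding t_def by simp
      then have "t * (\<bar>a xe \<bullet> w\<bar> + 1) \<le> \<delta> / 2" using p by (simp add: field_simps)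
      then show ?thesis using tpos by (simp add: algebra_simps)
    qed
    define u where "u = ue + t *\<^sub>R w"
    have "dist ue u = t * d" unfolding u_def d_def dist_norm using tpos by simp
    then have "u \<in> U" using e t1 by auto
    moreover have "a xe \<bullet> u \<ge> b xe"
    proof -
      have "a xe \<bullet> u = a xe \<bullet> ue + t * (a xe \<bullet> w)" unfolding u_def by (simp add: inner_simps)
      moreover have "t * (a xe \<bullet> w) \<ge> - (t * \<bar>a xe \<bullet> w\<bar>)" using tpos
        by (metis abs_ge_minus_self abs_mult abs_of_pos minus_le_iff)
      ultimately show ?thesis using t2 dl unfolding \<delta>_def by argo
    qed
    ultimately have le: "(norm (ue - un xe))\<^sup>2 \<le> (norm (u - un xe))\<^sup>2" using pi_min eq_u by auto
    have "u - un xe = - ((1 - t) *\<^sub>R w)" unfolding u_def w_def by (simp add: algebra_simps)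
    then have "norm (u - un xe) = (1 - t) * d" using th unfolding d_def by simp
    moreover have "norm (ue - un xe) = d" unfolding d_def w_def by (simp add: norm_minus_commute)
    ultimately have "d\<^sup>2 \<le> ((1 - t) * d)\<^sup>2" using le by simp
    moreover have "(1 - t) * d < d" using tpos dpos by simp
    moreover have "(1 - t) * d \<ge> 0" using th dpos by simp
    ultimately have "d\<^sup>2 \<le> ((1 - t) * d)\<^sup>2" "((1 - t) * d)\<^sup>2 < d\<^sup>2"
      by (auto intro: power_strict_mono)
    then show False by linarith
  qed
  have m1: "m = Suc (m - 1)" using m_pos by simp
  have Hd: "(lie f ^^ (m - 1)) h differentiable (at xe)"
  proof -
    have "Ck (m - (m - 1)) ((lie f ^^ (m - 1)) h)" using H_Ck[OF f_smooth h_smooth] by simp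
    then show ?thesis using m_pos by (simp add: Suc_diff_le)
  qed
  have aue: "a xe \<bullet> ue = - (lie f ^^ m) h xe"
  proof -
    have "(lie f ^^ m) h = lie f ((lie f ^^ (m - 1)) h)" by (subst m1) simp
    then show ?thesis using lie_eq[where f=f and g=g and ue=ue, OF Hd eq_x] a_def by simp
  qed
  define T where "T i = (lie f ^^ i) (\<Gamma> (m - i) \<circ> psi f h \<Gamma> (m - i - 1))" for i
  have sum0: "(\<Sum>i<m. T i xe) = 0" using active aue b_def unfolding T_def by simp
  have Tz: "T i xe = 0" if "1 \<le> i" "i < m" for i
  proof -
    define \<phi> where "\<phi> = (lie f ^^ (i - 1)) (\<Gamma> (m - i) \<circ> psi f h \<Gamma> (m - i - 1))"
    have "T i = lie f \<phi>" unfolding T_def \<phi>_def using that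
      by (metis Suc_diff_le diff_Suc_1 funpow.simps(2) o_apply)
    have w: "Wc f h m (m - i - 1) (m - (m - i - 1)) (psi f h \<Gamma> (m - i - 1))"
      by (rule psi_W) simp
    have "m - (m - i - 1) = Suc i" using that by simp
    then have w1: "Wc f h m (m - i - 1) i (psi f h \<Gamma> (m - i - 1))" using W_mono[OF w] by simp
    have c: "Ck i (\<Gamma> (m - i))" using Gamma_smooth that by (metis atLeastAtMost_iff diff_diff_cancel diff_le_self less_imp_le_nat  zero_less_diff Suc_leI One_nat_def)
    have "Wc f h m (m - i - 1) (1 + (i - 1)) (\<Gamma> (m - i) \<circ> psi f h \<Gamma> (m - i - 1))"
      using Wc.W_comp[OF w1 c] that by simp
    from W_lief_pow[OF f_smooth h_smooth this]
    have "Wc f h m (m - i - 1 + (i - 1)) 1 \<phi>" unfolding \<phi>_def .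
    moreover have "m - i - 1 + (i - 1) + 2 \<le> m" using that by simp
    ultimately have "lie f \<phi> xe = 0" using zero_lie by blast
    then show ?thesis using \<open>T i = lie f \<phi>\<close> by simp
  qed
  have "(\<Sum>i<m. T i xe) = T 0 xe"
  proof -
    have "(\<Sum>i<m. T i xe) = T 0 xe + (\<Sum>i<m - 1. T (Suc i) xe)"
      by (subst m1) (rule sum.lessThan_Suc_shift)
    moreover have "(\<Sum>i<m - 1. T (Suc i) xe) = 0" using Tz by (intro sum.neutral) auto
    ultimately show ?thesis by simp
  qed
  then have "\<Gamma> m (psi f h \<Gamma> (m - 1) xe) = 0" using sum0 unfolding T_def by simp
  moreover have "class_K (\<Gamma> m)" using Gamma_K m_pos by auto
  ultimately have top: "psi f h \<Gamma> (m - 1) xe = 0" using classK_zero by blast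
  have down: "n \<le> m - 1 \<Longrightarrow> psi f h \<Gamma> (m - 1 - n) xe = 0" for n
  proof (induction n)
    case 0 then show ?case using top by simp
  next
    case (Suc n)
    define k where "k = m - 1 - Suc n"
    have sk: "Suc k = m - 1 - n" using Suc.prems unfolding k_def by simp
    have p1: "psi f h \<Gamma> (Suc k) xe = 0" using Suc sk by simp
    have "Wc f h m k (m - k) (psi f h \<Gamma> k)" using psi_W unfolding k_def by simp
    moreover have "1 \<le> m - k" "k + 2 \<le> m" using Suc.prems m_pos unfolding k_def by auto
    ultimately have "lie f (psi f h \<Gamma> k) xe = 0" using zero_lie by blast
    then have "\<Gamma> (Suc k) (psi f h \<Gamma> k xe) = 0" using p1 by simp
    moreover have "class_K (\<Gamma> (Suc k))" using Gamma_K sk by auto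
    ultimately show ?case using classK_zero unfolding k_def by blast
  qed
  show ?thesis using down[of "m - 1"] by simp
qed

end
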